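(* Let $\{X_n\}_{n\ge1}$ be i.i.d. random variables with common distribution function $F$ satisfying Condition A1 with some $\gamma>0$. Fix a block length $m\ge 2$, and for $k\in\mathbb N$ let $M^{(m)}_{1:k}\le\dots\le M^{(m)}_{k:k}$ be the order statistics of the block maxima $M^{(m)}_1,\dots,M^{(m)}_k$. Let $(\theta_k)$ be a sequence with $\theta_k\in(0,k]$, $\theta_k\to\infty$ and $\theta_k/k\to0$ as $k\to\infty$. Then the estimator $$\hat\gamma(\theta_k,k):=(\log 2)^{-1}\Bigl(\log M^{(m)}_{k-[\theta_k/4]:k}-\log M^{(m)}_{k-[\theta_k/2]:k}\Bigr)$$ satisfies $\hat\gamma(\theta_k,k)\to\gamma$ in probability as $k\to\infty$.
   Context: Block maxima: $M^{(m)}_i:=\max_{(i-1)m<j\le im}X_j$, $i=1,\dots,k$; these are i.i.d. with distribution function $F^m$. For $u\in\mathbb R$, $[u]$ denotes the smallest integer greater than or equal to $u$. Define $V(t):=\bigl(1/(-\log F)\bigr)^{\leftarrow}(t)=F^{\leftarrow}(e^{-1/t})$, where ${}^{\leftarrow}$ denotes the generalised (left-continuous) inverse. Condition A1: (i) $\lim_{t\to\infty}\log V(tx)-\log V(t)=\gamma\log x$ for all $x>0$; (ii) for every $\varepsilon,\delta>0$ there is $t_0=t_0(\varepsilon,\delta)$ such that for $t\ge t_0$ and $x\ge1$, $|V(tx)/V(t)-x^{\gamma}|\le\varepsilon x^{\gamma+\delta}$. *)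

theory Defs
  imports "HOL-Probability.Probability"
begin

definition gen_inv :: "(real \<Rightarrow> real) \<Rightarrow> real \<Rightarrow> real" where
  "gen_inv G y = Inf {x. G x \<ge> y}"

text \<open>V(t) = (1/(-log F))^{<-}(t) = F^{<-}(exp(-1/t)).\<close>
definition V_fun :: "(real \<Rightarrow> real) \<Rightarrow> real \<Rightarrow> real" where
  "V_fun F t = gen_inv F (exp (- 1 / t))"

definition condA1 :: "(real \<Rightarrow> real) \<Rightarrow> real \<Rightarrow> bool" where
  "condA1 F \<gamma> \<longleftrightarrow>
     (\<forall>x>0. ((\<lambda>t. ln (V_fun F (t * x)) - ln (V_fun F t)) \<longlongrightarrow> \<gamma> * ln x) at_top) \<and>
     (\<forall>\<epsilon>>0. \<forall>\<delta>>0. \<exists>t0. \<forall>t\<ge>t0. \<forall>x\<ge>1.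
        \<bar>V_fun F (t * x) / V_fun F t - x powr \<gamma>\<bar> \<le> \<epsilon> * x powr (\<gamma> + \<delta>))"

definition block_max :: "(nat \<Rightarrow> 'a \<Rightarrow> real) \<Rightarrow> nat \<Rightarrow> nat \<Rightarrow> 'a \<Rightarrow> real" where
  "block_max X m i \<omega> = Max {X j \<omega> | j. (i - 1) * m < j \<and> j \<le> i * m}"

definition ord_stat :: "real list \<Rightarrow> nat \<Rightarrow> real" where
  "ord_stat ys r = sort ys ! (r - 1)"

definition block_ord_stat :: "(nat \<Rightarrow> 'a \<Rightarrow> real) \<Rightarrow> nat \<Rightarrow> nat \<Rightarrow> nat \<Rightarrow> 'a \<Rightarrow> real" where
  "block_ord_stat X m k r \<omega> = ord_stat (map (\<lambda>i. block_max X m i \<omega>) [1..<k+1]) r"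

text \<open>The estimator; [u] is the ceiling.\<close>
definition gamma_hat :: "(nat \<Rightarrow> 'a \<Rightarrow> real) \<Rightarrow> nat \<Rightarrow> real \<Rightarrow> nat \<Rightarrow> 'a \<Rightarrow> real" where
  "gamma_hat X m \<theta> k \<omega> =
     (ln (block_ord_stat X m k (nat (int k - \<lceil>\<theta> / 4\<rceil>)) \<omega>)
      - ln (block_ord_stat X m k (nat (int k - \<lceil>\<theta> / 2\<rceil>)) \<omega>)) / ln 2"

end

theory Submission
  imports Defs
begin


locale bm = prob_space M for M :: "'a measure" +
  fixes X :: "nat \<Rightarrow> 'a \<Rightarrow> real" and F :: "real \<Rightarrow> real" and m :: nat
  assumes Xmeas: "\<And>j. j \<ge> 1 \<Longrightarrow> X j \<in> borel_measurable M"
    and indep: "indep_vars (\<lambda>_. borel) X {1..}"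
    and Fdef: "\<And>j x. j \<ge> 1 \<Longrightarrow> measure M {\<omega> \<in> space M. X j \<omega> \<le> x} = F x"
    and m1: "m \<ge> 1"
begin

definition D where "D = distr M borel (X 1)"

lemma D_rd: "real_distribution D"
  unfolding D_def using Xmeas[of 1] by auto

lemma F_cdf: "F x = cdf D x"
proof -
  have "cdf D x = measure M (X 1 -` {..x} \<inter> space M)"
    unfolding cdf_def D_def using Xmeas[of 1] by (simp add: measure_distr)
  also have "X 1 -` {..x} \<inter> space M = {\<omega> \<in> space M. X 1 \<omega> \<le> x}" by auto
  finally show ?thesis using Fdef[of 1 x] by simp
qed

lemma F_eq: "F = cdf D" using F_cdf by auto

lemma F_mono: "x \<le> y \<Longrightarrow> F x \<le> F y"
  unfolding F_eq using D_rd by (simp add: real_distribution.finite_borel_measure_M finite_borel_measure.cdf_nondecreasing)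

lemma F_nonneg: "0 \<le> F x"
  unfolding F_eq using D_rd by (simp add: real_distribution.finite_borel_measure_M finite_borel_measure.cdf_nonneg)

lemma F_le1: "F x \<le> 1"
  unfolding F_eq using D_rd by (simp add: real_distribution.cdf_bounded_prob)

lemma F_rc: "continuous (at_right a) F"
  unfolding F_eq using D_rd by (simp add: real_distribution.finite_borel_measure_M finite_borel_measure.cdf_is_right_cont)

lemma F_top: "(F \<longlongrightarrow> 1) at_top"
  unfolding F_eq using D_rd by (simp add: real_distribution.cdf_lim_at_top_prob)

lemma F_bot: "(F \<longlongrightarrow> 0) at_bot"
  unfolding F_eq using D_rd by (simp add: real_distribution.finite_borel_measure_M finite_borel_measure.cdf_lim_at_bot)

lemma S_ne: assumes "u < 1" shows "{x. F x \<ge> u} \<noteq> {}"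
proof -
  have "eventually (\<lambda>x. F x > u) at_top" using F_top assms by (simp add: order_tendstoD(1))
  then obtain x where "F x > u" by (meson eventually_at_top_linorder order.refl)
  then have "F x \<ge> u" by simp
  then show ?thesis by auto
qed

lemma S_bdd: assumes "0 < u" shows "bdd_below {x. F x \<ge> u}"
proof -
  have "eventually (\<lambda>x. F x < u) at_bot" using F_bot assms by (simp add: order_tendstoD(2))
  then obtain b where b: "\<And>x. x \<le> b \<Longrightarrow> F x < u" by (auto simp: eventually_at_bot_linorder)
  show ?thesis unfolding bdd_below_def
  proof (rule exI[of _ b], safe)
    fix x assume "u \<le> F x"
    then show "b \<le> x" using b[of x] by (cases "x \<le> b") auto
  qed
qed

lemma G2: assumes "0 < u" "x < gen_inv F u" shows "F x < u"
proof (rule ccontr)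
  assume "\<not> F x < u"
  then have "gen_inv F u \<le> x" unfolding gen_inv_def using S_bdd[OF assms(1)]
    by (intro cInf_lower) auto
  then show False using assms by simp
qed

lemma G1: assumes "0 < u" "u < 1" shows "F (gen_inv F u) \<ge> u"
proof (rule ccontr)
  let ?v = "gen_inv F u"
  assume "\<not> F ?v \<ge> u"
  then have "F ?v < u" by simp
  moreover have "(F \<longlongrightarrow> F ?v) (at_right ?v)" using F_rc[of ?v] by (simp add: continuous_within)
  ultimately have "eventually (\<lambda>x. F x < u) (at_right ?v)" by (simp add: order_tendstoD(2))
  then obtain b where b: "b > ?v" "\<And>y. ?v < y \<Longrightarrow> y < b \<Longrightarrow> F y < u"
    unfolding eventually_at_right_field by blast
  define d where "d = b - ?v"
  have d: "d > 0" "\<And>x. ?v < x \<Longrightarrow> x < ?v + d \<Longrightarrow> F x < u" using b unfolding d_def by auto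
  have "?v + d / 2 \<le> ?v" unfolding gen_inv_def
  proof (rule cInf_greatest)
    show "{x. F x \<ge> u} \<noteq> {}" using S_ne assms by auto
    fix x assume x: "x \<in> {x. F x \<ge> u}"
    show "Inf {x. u \<le> F x} + d / 2 \<le> x"
    proof (rule ccontr)
      assume "\<not> ?thesis"
      then have xl: "x < ?v + d/2" unfolding gen_inv_def by simp
      have "F x \<le> F (?v + d/2)" using xl F_mono by simp
      also have "F (?v + d/2) < u" using d by auto
      finally show False using x by simp
    qed
  qed
  then show False using d by simp
qed

lemma G3: assumes "0 < u" "u \<le> u'" "u' < 1" shows "gen_inv F u \<le> gen_inv F u'"
  unfolding gen_inv_def
  by (rule cInf_superset_mono) (use S_ne[OF assms(3)] S_bdd[OF assms(1)] assms in auto)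

lemma V_mono: assumes "0 < t" "t \<le> t'" shows "V_fun F t \<le> V_fun F t'"
  unfolding V_fun_def
  by (rule G3) (use assms in \<open>auto simp: divide_simps\<close>)

lemma V_G1: assumes "0 < t" shows "F (V_fun F t) \<ge> exp (-1/t)"
  unfolding V_fun_def by (rule G1) (use assms in auto)

lemma V_G2: assumes "x < V_fun F t" shows "F x < exp (-1/t)"
  using G2 assms unfolding V_fun_def by auto

end



context bm begin

definition B :: "nat \<Rightarrow> nat set" where "B i = {(i - 1) * m <.. i * m}"
definition C :: "real \<Rightarrow> nat \<Rightarrow> 'a set" where
  "C x i = {\<omega> \<in> space M. \<forall>l\<in>B i. X l \<omega> \<le> x}"
definition Z :: "nat \<Rightarrow> real \<Rightarrow> 'a \<Rightarrow> real" where
  "Z k x \<omega> = (\<Sum>i\<in>{1..k}. indicator (C x i) \<omega>)"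

lemma B_fin: "finite (B i)" unfolding B_def by simp

lemma card_B: "i \<ge> 1 \<Longrightarrow> card (B i) = m"
proof -
  assume "i \<ge> 1"
  then obtain i0 where "i = Suc i0" by (cases i) auto
  then show ?thesis unfolding B_def by simp
qed

lemma B_ne: "i \<ge> 1 \<Longrightarrow> B i \<noteq> {}"
  using card_B m1 by (metis card.empty not_one_le_zero)

lemma B_ge1: "l \<in> B i \<Longrightarrow> l \<ge> 1"
  unfolding B_def by auto

lemma B_disj_aux: "i < i' \<Longrightarrow> B i \<inter> B i' = {}"
proof -
  assume "i < i'"
  then have "i \<le> i' - 1" by simp
  then have "i * m \<le> (i' - 1) * m" by simp
  then show ?thesis unfolding B_def by auto
qed

lemma B_disj: "i \<noteq> i' \<Longrightarrow> B i \<inter> B i' = {}"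
  using B_disj_aux by (metis Int_commute linorder_neqE_nat)

lemma prod_lemma:
  assumes "finite J" "J \<noteq> {}" "J \<subseteq> {1..}"
  shows "prob {\<omega> \<in> space M. \<forall>l\<in>J. X l \<omega> \<le> x} = F x ^ card J"
proof -
  have ind: "indep_sets (\<lambda>i. {X i -` A \<inter> space M | A. A \<in> sets borel}) {1..}"
    using indep unfolding indep_vars_def2 by (rule conjunct2)
  have "prob (\<Inter>l\<in>J. X l -` {..x} \<inter> space M) = (\<Prod>l\<in>J. prob (X l -` {..x} \<inter> space M))"
  proof (rule indep_setsD[OF ind])
    show "\<forall>l\<in>J. X l -` {..x} \<inter> space M \<in> {X l -` A \<inter> space M | A. A \<in> sets borel}"
      by (auto intro!: exI[of _ "{..x}"])
  qed (use assms in auto)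
  also have "\<dots> = (\<Prod>l\<in>J. F x)"
  proof (rule prod.cong)
    fix l assume "l \<in> J"
    then have "l \<ge> 1" using assms by auto
    have "X l -` {..x} \<inter> space M = {\<omega> \<in> space M. X l \<omega> \<le> x}" by auto
    then show "prob (X l -` {..x} \<inter> space M) = F x" using Fdef[OF \<open>l \<ge> 1\<close>] by simp
  qed simp
  also have "\<dots> = F x ^ card J" by simp
  also have "(\<Inter>l\<in>J. X l -` {..x} \<inter> space M) = {\<omega> \<in> space M. \<forall>l\<in>J. X l \<omega> \<le> x}"
    using assms(2) by auto
  finally show ?thesis .
qed

lemma set_events:
  assumes "finite J" "J \<noteq> {}" "J \<subseteq> {1..}"
  shows "{\<omega> \<in> space M. \<forall>l\<in>J. X l \<omega> \<le> x} \<in> events"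
proof -
  have "(\<Inter>l\<in>J. X l -` {..x} \<inter> space M) \<in> events"
  proof (rule sets.finite_INT)
    fix l assume "l \<in> J"
    then have "l \<ge> 1" using assms by auto
    show "X l -` {..x} \<inter> space M \<in> events"
      using Xmeas[OF \<open>l \<ge> 1\<close>] by (simp add: measurable_sets)
  qed (use assms in auto)
  also have "(\<Inter>l\<in>J. X l -` {..x} \<inter> space M) = {\<omega> \<in> space M. \<forall>l\<in>J. X l \<omega> \<le> x}"
    using assms(2) by auto
  finally show ?thesis .
qed

lemma C_events: "i \<ge> 1 \<Longrightarrow> C x i \<in> events"
  unfolding C_def by (rule set_events) (use B_fin B_ne B_ge1 in auto)

lemma prob_C: "i \<ge> 1 \<Longrightarrow> prob (C x i) = F x ^ m"
  unfolding C_def by (subst prod_lemma) (use B_fin B_ne B_ge1 card_B in auto)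

lemma prob_CC: assumes "i \<ge> 1" "i' \<ge> 1" "i \<noteq> i'"
  shows "prob (C x i \<inter> C x i') = (F x ^ m)\<^sup>2"
proof -
  have e: "C x i \<inter> C x i' = {\<omega> \<in> space M. \<forall>l\<in>B i \<union> B i'. X l \<omega> \<le> x}"
    unfolding C_def by auto
  have c: "card (B i \<union> B i') = 2 * m"
    using card_Un_disjoint[OF B_fin B_fin B_disj[OF assms(3)]] card_B assms by simp
  have "prob (C x i \<inter> C x i') = F x ^ card (B i \<union> B i')"
    unfolding e by (rule prod_lemma) (use B_fin B_ne B_ge1 assms in auto)
  also have "\<dots> = (F x ^ m)\<^sup>2" unfolding c by (simp add: power_mult mult.commute)
  finally show ?thesis .
qed

lemma Z_meas: "Z k x \<in> borel_measurable M"
  unfolding Z_def by (intro borel_measurable_sum borel_measurable_indicator) (auto intro: C_events)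

lemma int_ind: "i \<ge> 1 \<Longrightarrow> integrable M (indicator (C x i) :: 'a \<Rightarrow> real)"
  using C_events by (intro integrable_real_indicator) (auto simp: less_top[symmetric])

lemma int_ind2: "i \<ge> 1 \<Longrightarrow> i' \<ge> 1 \<Longrightarrow> integrable M (indicator (C x i \<inter> C x i') :: 'a \<Rightarrow> real)"
  using C_events by (intro integrable_real_indicator) (auto simp: less_top[symmetric])

lemma Z_sq_expand:
  "(Z k x \<omega> - c)\<^sup>2 = (\<Sum>i\<in>{1..k}. \<Sum>i'\<in>{1..k}. indicator (C x i \<inter> C x i') \<omega>)
      - 2 * c * (\<Sum>i\<in>{1..k}. indicator (C x i) \<omega>) + c\<^sup>2"
proof -
  have h: "(Z k x \<omega>)\<^sup>2 = (\<Sum>i\<in>{1..k}. \<Sum>i'\<in>{1..k}. indicator (C x i \<inter> C x i') \<omega>)"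
    unfolding Z_def power2_eq_square sum_product indicator_inter_arith ..
  have "(Z k x \<omega> - c)\<^sup>2 = (Z k x \<omega>)\<^sup>2 - 2*c*(Z k x \<omega>) + c\<^sup>2"
    by (simp add: power2_eq_square algebra_simps)
  also have "\<dots> = (\<Sum>i\<in>{1..k}. \<Sum>i'\<in>{1..k}. indicator (C x i \<inter> C x i') \<omega>)
      - 2 * c * (\<Sum>i\<in>{1..k}. indicator (C x i) \<omega>) + c\<^sup>2"
    unfolding h unfolding Z_def ..
  finally show ?thesis .
qed

lemma var_Z:
  fixes x :: real
  defines "q \<equiv> F x ^ m"
  shows "expectation (\<lambda>\<omega>. (Z k x \<omega> - real k * q)\<^sup>2) = real k * q - real k * q\<^sup>2"
    and "integrable M (\<lambda>\<omega>. (Z k x \<omega> - real k * q)\<^sup>2)"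
proof -
  let ?c = "real k * q"
  have I1: "integrable M (\<lambda>\<omega>. (\<Sum>i\<in>{1..k}. \<Sum>i'\<in>{1..k}. indicator (C x i \<inter> C x i') \<omega> :: real))"
    apply (rule Bochner_Integration.integrable_sum) apply (rule Bochner_Integration.integrable_sum) using int_ind2 by auto
  have I2: "integrable M (\<lambda>\<omega>. 2 * ?c * (\<Sum>i\<in>{1..k}. indicator (C x i) \<omega> :: real))"
    apply (rule Bochner_Integration.integrable_mult_right)
    apply (rule Bochner_Integration.integrable_sum) using int_ind by auto
  have E1: "expectation (\<lambda>\<omega>. (\<Sum>i\<in>{1..k}. \<Sum>i'\<in>{1..k}. indicator (C x i \<inter> C x i') \<omega> :: real))
      = (\<Sum>i\<in>{1..k}. \<Sum>i'\<in>{1..k}. prob (C x i \<inter> C x i'))"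
  proof -
    have "expectation (\<lambda>\<omega>. (\<Sum>i\<in>{1..k}. \<Sum>i'\<in>{1..k}. indicator (C x i \<inter> C x i') \<omega> :: real))
      = (\<Sum>i\<in>{1..k}. expectation (\<lambda>\<omega>. \<Sum>i'\<in>{1..k}. indicator (C x i \<inter> C x i') \<omega> :: real))"
      apply (rule Bochner_Integration.integral_sum)
      apply (rule Bochner_Integration.integrable_sum) using int_ind2 by auto
    also have "\<dots> = (\<Sum>i\<in>{1..k}. \<Sum>i'\<in>{1..k}. expectation (indicator (C x i \<inter> C x i') :: 'a \<Rightarrow> real))"
      apply (rule sum.cong[OF refl])
      apply (rule Bochner_Integration.integral_sum) using int_ind2 by auto
    also have "\<dots> = (\<Sum>i\<in>{1..k}. \<Sum>i'\<in>{1..k}. prob (C x i \<inter> C x i'))"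
      apply (rule sum.cong[OF refl])+
      apply (simp only: Bochner_Integration.integral_indicator)
      apply (rule arg_cong[where f = prob]) unfolding C_def by auto
    finally show ?thesis .
  qed
  also have "\<dots> = (\<Sum>i\<in>{1..k}. \<Sum>i'\<in>{1..k}. q\<^sup>2 + (if i = i' then q - q\<^sup>2 else 0))"
    by (intro sum.cong refl) (auto simp: prob_CC prob_C q_def)
  also have "\<dots> = real k * (real k * q\<^sup>2 + (q - q\<^sup>2))"
    by (simp add: sum.distrib)
  finally have E1: "expectation (\<lambda>\<omega>. (\<Sum>i\<in>{1..k}. \<Sum>i'\<in>{1..k}. indicator (C x i \<inter> C x i') \<omega> :: real))
      = real k * (real k * q\<^sup>2 + (q - q\<^sup>2))" .
  have E2: "expectation (\<lambda>\<omega>. 2 * ?c * (\<Sum>i\<in>{1..k}. indicator (C x i) \<omega> :: real)) = 2 * ?c * (real k * q)"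
  proof -
    have "expectation (\<lambda>\<omega>. 2 * ?c * (\<Sum>i\<in>{1..k}. indicator (C x i) \<omega> :: real))
       = 2 * ?c * expectation (\<lambda>\<omega>. (\<Sum>i\<in>{1..k}. indicator (C x i) \<omega> :: real))"
      by (rule integral_mult_right_zero)
    also have "expectation (\<lambda>\<omega>. (\<Sum>i\<in>{1..k}. indicator (C x i) \<omega> :: real))
       = (\<Sum>i\<in>{1..k}. expectation (indicator (C x i) :: 'a \<Rightarrow> real))"
      apply (rule Bochner_Integration.integral_sum) using int_ind by auto
    also have "\<dots> = (\<Sum>i\<in>{1..k}. q)"
    proof (rule sum.cong[OF refl])
      fix i assume "i \<in> {1..k}"
      then have i1: "i \<ge> 1" by simp
      have "C x i \<inter> space M = C x i" unfolding C_def by auto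
      then show "expectation (indicator (C x i) :: 'a \<Rightarrow> real) = q"
        using prob_C[OF i1, of x] unfolding q_def by simp
    qed
    also have "\<dots> = real k * q" by simp
    finally show ?thesis .
  qed
  have eq: "(\<lambda>\<omega>. (Z k x \<omega> - ?c)\<^sup>2) = (\<lambda>\<omega>. (\<Sum>i\<in>{1..k}. \<Sum>i'\<in>{1..k}. indicator (C x i \<inter> C x i') \<omega>)
      - 2 * ?c * (\<Sum>i\<in>{1..k}. indicator (C x i) \<omega>) + ?c\<^sup>2)"
    using Z_sq_expand by auto
  show "integrable M (\<lambda>\<omega>. (Z k x \<omega> - ?c)\<^sup>2)"
    unfolding eq by (rule Bochner_Integration.integrable_add[OF Bochner_Integration.integrable_diff[OF I1 I2] integrable_const])
  let ?F1 = "\<lambda>\<omega>. (\<Sum>i\<in>{1..k}. \<Sum>i'\<in>{1..k}. indicator (C x i \<inter> C x i') \<omega> :: real)"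
  let ?G1 = "\<lambda>\<omega>. 2 * ?c * (\<Sum>i\<in>{1..k}. indicator (C x i) \<omega> :: real)"
  have "expectation (\<lambda>\<omega>. ?F1 \<omega> - ?G1 \<omega> + ?c\<^sup>2) = expectation (\<lambda>\<omega>. ?F1 \<omega> - ?G1 \<omega>) + expectation (\<lambda>\<omega>. ?c\<^sup>2)"
    by (rule Bochner_Integration.integral_add[OF Bochner_Integration.integrable_diff[OF I1 I2] integrable_const])
  also have "expectation (\<lambda>\<omega>. ?F1 \<omega> - ?G1 \<omega>) = expectation ?F1 - expectation ?G1"
    by (rule Bochner_Integration.integral_diff[OF I1 I2])
  also have "expectation (\<lambda>\<omega>. ?c\<^sup>2) = ?c\<^sup>2" by (simp add: prob_space)
  also have "expectation ?F1 - expectation ?G1 + ?c\<^sup>2 = ?c - real k * q\<^sup>2"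
    unfolding E1 E2 by (simp add: power2_eq_square algebra_simps)
  finally have "expectation (\<lambda>\<omega>. ?F1 \<omega> - ?G1 \<omega> + ?c\<^sup>2) = ?c - real k * q\<^sup>2" .
  then show "expectation (\<lambda>\<omega>. (Z k x \<omega> - ?c)\<^sup>2) = ?c - real k * q\<^sup>2"
    unfolding eq .
qed

lemma cheb:
  assumes "d > 0"
  shows "prob {\<omega> \<in> space M. \<bar>Z k x \<omega> - real k * F x ^ m\<bar> \<ge> d}
     \<le> real k * (1 - F x ^ m) / d\<^sup>2"
proof -
  let ?q = "F x ^ m"
  have "prob {\<omega> \<in> space M. \<bar>Z k x \<omega> - real k * ?q\<bar> \<ge> d}
     \<le> expectation (\<lambda>\<omega>. (Z k x \<omega> - real k * ?q) ^ 2) / d\<^sup>2"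
    by (rule second_moment_method[OF borel_measurable_diff[OF Z_meas borel_measurable_const] var_Z(2) assms])
  also have "\<dots> = (real k * ?q - real k * ?q\<^sup>2) / d\<^sup>2" using var_Z(1) by simp
  also have "\<dots> \<le> real k * (1 - ?q) / d\<^sup>2"
  proof (rule divide_right_mono)
    have "0 \<le> ?q" "?q \<le> 1" using F_nonneg F_le1 by (auto intro: power_le_one)
    then have "?q - ?q\<^sup>2 \<le> 1 - ?q"
    proof -
      have "0 \<le> (1 - ?q)\<^sup>2" by simp
      then show ?thesis by (simp add: power2_eq_square algebra_simps)
    qed
    then show "real k * ?q - real k * ?q\<^sup>2 \<le> real k * (1 - ?q)"
      by (metis mult_left_mono of_nat_0_le_iff right_diff_distrib)
  qed simp
  finally show ?thesis .
qed

end



lemma filter_sorted_takeWhile: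
  "sorted (s :: real list) \<Longrightarrow> filter (\<lambda>y. y \<le> x) s = takeWhile (\<lambda>y. y \<le> x) s"
proof (induction s)
  case Nil then show ?case by simp
next
  case (Cons a s)
  show ?case
  proof (cases "a \<le> x")
    case True then show ?thesis using Cons by simp
  next
    case False
    then have "\<forall>y\<in>set s. \<not> y \<le> x" using Cons.prems by auto
    then have "filter (\<lambda>y. y \<le> x) s = []" by (simp add: filter_empty_conv)
    then show ?thesis using False by simp
  qed
qed

lemma sorted_nth_le_iff:
  assumes "sorted (s :: real list)" "i < length s"
  shows "s ! i \<le> x \<longleftrightarrow> i < length (filter (\<lambda>y. y \<le> x) s)"
proof -
  let ?P = "\<lambda>y. y \<le> x"
  have fe: "filter ?P s = takeWhile ?P s" using filter_sorted_takeWhile[OF assms(1)] .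
  show ?thesis
  proof
    assume le: "s ! i \<le> x"
    have "\<forall>j<Suc i. ?P (s ! j)"
    proof (intro allI impI)
      fix j assume "j < Suc i"
      then have "s ! j \<le> s ! i" using assms by (intro sorted_nth_mono) auto
      then show "?P (s ! j)" using le by simp
    qed
    then have "Suc i \<le> length (takeWhile ?P s)"
      using assms(2) by (intro length_takeWhile_less_P_nth) auto
    then show "i < length (filter ?P s)" using fe by simp
  next
    assume "i < length (filter ?P s)"
    then have il: "i < length (takeWhile ?P s)" using fe by simp
    then have "takeWhile ?P s ! i = s ! i" by (rule takeWhile_nth)
    moreover have "takeWhile ?P s ! i \<in> set (takeWhile ?P s)" using il by simp
    ultimately show "s ! i \<le> x" by (metis set_takeWhileD)
  qed
qed

lemma ord_stat_le_iff:
  assumes "1 \<le> r" "r \<le> length ys"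
  shows "ord_stat ys r \<le> x \<longleftrightarrow> r \<le> length (filter (\<lambda>y. y \<le> x) ys)"
proof -
  have l: "length (filter (\<lambda>y. y \<le> x) (sort ys)) = length (filter (\<lambda>y. y \<le> x) ys)"
    by (metis mset_filter mset_sort size_mset)
  have "ord_stat ys r \<le> x \<longleftrightarrow> r - 1 < length (filter (\<lambda>y. y \<le> x) (sort ys))"
    unfolding ord_stat_def by (rule sorted_nth_le_iff) (use assms in auto)
  then show ?thesis using l assms by auto
qed

lemma length_filter_map_upt:
  "length (filter P (map f [1..<k+1])) = card {i \<in> {1..k}. P (f i)}"
proof -
  have "length (filter P (map f [1..<k+1])) = length (filter (P \<circ> f) [1..<k+1])"
    by (simp only: filter_map length_map)
  also have "\<dots> = card (set (filter (P \<circ> f) [1..<k+1]))"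
    by (intro distinct_card[symmetric] distinct_filter distinct_upt)
  also have "set (filter (P \<circ> f) [1..<k+1]) = {i \<in> {1..k}. P (f i)}"
    by (auto simp del: upt_Suc)
  finally show ?thesis .
qed

lemma aux_eq1: "(j::real) > 0 \<Longrightarrow> c > 0 \<Longrightarrow> b > 0 \<Longrightarrow> (j / b) / (j * c / b)\<^sup>2 = b / (c\<^sup>2 * j)"
  by (simp add: field_simps power2_eq_square)

lemma aux_eq2: "(P::real) > 0 \<Longrightarrow> c > 0 \<Longrightarrow> b > 0 \<Longrightarrow> P / (P * c / b)\<^sup>2 = b\<^sup>2 / (P * c\<^sup>2)"
  by (simp add: field_simps power2_eq_square)

lemma aux_eq3: "(j::real) > 0 \<Longrightarrow> c > 0 \<Longrightarrow> b > 0 \<Longrightarrow> b\<^sup>2 / ((b * j) * c\<^sup>2) = b / (c\<^sup>2 * j)"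
  by (simp add: field_simps power2_eq_square)

context bm begin

lemma block_max_le_iff:
  assumes "i \<ge> 1"
  shows "block_max X m i \<omega> \<le> x \<longleftrightarrow> (\<forall>l\<in>B i. X l \<omega> \<le> x)"
proof -
  have e: "{X j \<omega> | j. (i - 1) * m < j \<and> j \<le> i * m} = (\<lambda>j. X j \<omega>) ` B i"
    unfolding B_def by auto
  show ?thesis unfolding block_max_def e
    using B_fin B_ne[OF assms] by (simp add: Max_le_iff)
qed

lemma Z_card: "\<omega> \<in> space M \<Longrightarrow> Z k x \<omega> = real (card {i \<in> {1..k}. block_max X m i \<omega> \<le> x})"
proof -
  assume om: "\<omega> \<in> space M"
  have "Z k x \<omega> = (\<Sum>i\<in>{1..k}. if block_max X m i \<omega> \<le> x then 1 else 0)"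
    unfolding Z_def
    by (intro sum.cong refl) (use om block_max_le_iff in \<open>auto simp: C_def indicator_def\<close>)
  also have "\<dots> = (\<Sum>i\<in>{i \<in> {1..k}. block_max X m i \<omega> \<le> x}. 1)"
    by (rule sum.inter_filter[symmetric]) simp
  finally show ?thesis by simp
qed

lemma T_le_iff:
  assumes "\<omega> \<in> space M" "1 \<le> r" "r \<le> k"
  shows "block_ord_stat X m k r \<omega> \<le> x \<longleftrightarrow> real r \<le> Z k x \<omega>"
proof -
  have "block_ord_stat X m k r \<omega> \<le> x \<longleftrightarrow>
      r \<le> length (filter (\<lambda>y. y \<le> x) (map (\<lambda>i. block_max X m i \<omega>) [1..<k+1]))"
    unfolding block_ord_stat_def by (rule ord_stat_le_iff) (use assms in \<open>simp del: upt_Suc\<close>)+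
  also have "\<dots> \<longleftrightarrow> r \<le> card {i \<in> {1..k}. block_max X m i \<omega> \<le> x}"
    by (simp only: length_filter_map_upt)
  also have "\<dots> \<longleftrightarrow> real r \<le> Z k x \<omega>" using Z_card[OF assms(1)] by simp
  finally show ?thesis .
qed

lemma bound_U:
  assumes "j > 0" "b > 1" "real k * (1 - F x ^ m) \<le> real j / b"
  shows "prob {\<omega> \<in> space M. Z k x \<omega> < real k - real j} \<le> b / ((b - 1)\<^sup>2 * real j)"
proof -
  let ?q = "F x ^ m"
  define d where "d = real j * (b - 1) / b"
  have dpos: "d > 0" using assms unfolding d_def by auto
  have jb: "real j - real j / b = d" unfolding d_def using assms by (simp add: field_simps)
  have sub: "{\<omega> \<in> space M. Z k x \<omega> < real k - real j} \<subseteq> {\<omega> \<in> space M. \<bar>Z k x \<omega> - real k * ?q\<bar> \<ge> d}"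
  proof safe
    fix \<omega> assume "\<omega> \<in> space M" "Z k x \<omega> < real k - real j"
    then have "real k * ?q - Z k x \<omega> > real j - real k * (1 - ?q)"
      by (simp add: algebra_simps)
    then have "real k * ?q - Z k x \<omega> \<ge> d" using assms(3) jb by linarith
    then show "\<bar>Z k x \<omega> - real k * ?q\<bar> \<ge> d" by linarith
  qed
  have meas: "{\<omega> \<in> space M. \<bar>Z k x \<omega> - real k * ?q\<bar> \<ge> d} \<in> events"
    using Z_meas[of k x] by measurable
  have "prob {\<omega> \<in> space M. Z k x \<omega> < real k - real j} \<le> prob {\<omega> \<in> space M. \<bar>Z k x \<omega> - real k * ?q\<bar> \<ge> d}"
    by (rule finite_measure_mono[OF sub meas])
  also have "\<dots> \<le> real k * (1 - ?q) / d\<^sup>2" by (rule cheb[OF dpos])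
  also have "\<dots> \<le> (real j / b) / d\<^sup>2" by (rule divide_right_mono[OF assms(3)]) simp
  also have "\<dots> = b / ((b - 1)\<^sup>2 * real j)"
    unfolding d_def by (rule aux_eq1) (use assms in auto)
  finally show ?thesis .
qed

lemma bound_L:
  assumes "j > 0" "b > 1" "b * real j \<le> real k * (1 - F x ^ m)"
  shows "prob {\<omega> \<in> space M. Z k x \<omega> \<ge> real k - real j} \<le> b / ((b - 1)\<^sup>2 * real j)"
proof -
  let ?q = "F x ^ m"
  define P where "P = real k * (1 - ?q)"
  have Ppos: "P > 0" using assms unfolding P_def by (smt (verit) mult_pos_pos of_nat_0_less_iff)
  define d where "d = P * (b - 1) / b"
  have dpos: "d > 0" using assms Ppos unfolding d_def by auto
  have jP: "real j \<le> P / b" using assms unfolding P_def by (simp add: field_simps)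
  have Pd: "P - P / b = d" unfolding d_def using assms by (simp add: field_simps)
  have sub: "{\<omega> \<in> space M. Z k x \<omega> \<ge> real k - real j} \<subseteq> {\<omega> \<in> space M. \<bar>Z k x \<omega> - real k * ?q\<bar> \<ge> d}"
  proof safe
    fix \<omega> assume "\<omega> \<in> space M" "Z k x \<omega> \<ge> real k - real j"
    then have "Z k x \<omega> - real k * ?q \<ge> P - real j"
      unfolding P_def by (simp add: algebra_simps)
    then have "Z k x \<omega> - real k * ?q \<ge> d" using jP Pd by linarith
    then show "\<bar>Z k x \<omega> - real k * ?q\<bar> \<ge> d" by linarith
  qed
  have meas: "{\<omega> \<in> space M. \<bar>Z k x \<omega> - real k * ?q\<bar> \<ge> d} \<in> events"
    using Z_meas[of k x] by measurable
  have "prob {\<omega> \<in> space M. Z k x \<omega> \<ge> real k - real j} \<le> prob {\<omega> \<in> space M. \<bar>Z k x \<omega> - real k * ?q\<bar> \<ge> d}"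
    by (rule finite_measure_mono[OF sub meas])
  also have "\<dots> \<le> P / d\<^sup>2" using cheb[OF dpos] unfolding P_def .
  also have "\<dots> = b\<^sup>2 / (P * (b - 1)\<^sup>2)"
    unfolding d_def by (rule aux_eq2) (use assms Ppos in auto)
  also have "\<dots> \<le> b\<^sup>2 / ((b * real j) * (b - 1)\<^sup>2)"
  proof (rule divide_left_mono)
    have bjP: "b * real j \<le> P" using assms(3) unfolding P_def .
    then show "b * real j * (b - 1)\<^sup>2 \<le> P * (b - 1)\<^sup>2" by (rule mult_right_mono) simp
    show "0 \<le> b\<^sup>2" by simp
    show "0 < P * (b - 1)\<^sup>2 * (b * real j * (b - 1)\<^sup>2)"
      using assms Ppos by (intro mult_pos_pos) auto
  qed
  also have "\<dots> = b / ((b - 1)\<^sup>2 * real j)"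
    by (rule aux_eq3) (use assms in auto)
  finally show ?thesis .
qed

end



lemma one_minus_exp_le: "0 \<le> y \<Longrightarrow> 1 - exp (- y) \<le> (y::real)"
  using exp_ge_add_one_self[of "-y"] by linarith

lemma one_minus_exp_ge: "0 \<le> y \<Longrightarrow> y / (1 + y) \<le> 1 - exp (- (y::real))"
proof -
  assume y: "0 \<le> y"
  have "1 + y \<le> exp y" by (rule exp_ge_add_one_self)
  then have "exp (- y) \<le> 1 / (1 + y)" using y
    by (simp add: exp_minus divide_simps)
  moreover have "1 - 1 / (1 + y) = y / (1 + y)" using y by (simp add: field_simps)
  ultimately show ?thesis by linarith
qed

context bm begin

lemma thr_U:
  assumes "b > 0" "j > 0" "k > 0"
  shows "real k * (1 - F (V_fun F (b * (real m * real k / real j))) ^ m) \<le> real j / b"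
proof -
  let ?t = "b * (real m * real k / real j)"
  have tpos: "?t > 0" using assms m1 by auto
  have "exp (-1 / ?t) \<le> F (V_fun F ?t)" by (rule V_G1[OF tpos])
  then have "exp (-1 / ?t) ^ m \<le> F (V_fun F ?t) ^ m" by (rule power_mono) simp
  moreover have "exp (-1 / ?t) ^ m = exp (- (real j / (b * real k)))"
    using assms m1 by (simp add: exp_of_nat_mult[symmetric] field_simps)
  ultimately have "1 - F (V_fun F ?t) ^ m \<le> 1 - exp (- (real j / (b * real k)))" by simp
  also have "\<dots> \<le> real j / (b * real k)" by (rule one_minus_exp_le) (use assms in auto)
  finally have "real k * (1 - F (V_fun F ?t) ^ m) \<le> real k * (real j / (b * real k))"
    by (rule mult_left_mono) simp
  also have "\<dots> = real j / b" using assms by simp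
  finally show ?thesis .
qed

lemma thr_L:
  assumes "b > 1" "j > 0" "k > 0" "b\<^sup>2 * real j / real k \<le> b - 1"
    and "V_fun F (real m * real k / real j / b\<^sup>2) > 0"
  shows "b * real j \<le> real k * (1 - F (V_fun F (real m * real k / real j / b\<^sup>2) / b) ^ m)"
proof -
  let ?t = "real m * real k / real j / b\<^sup>2"
  let ?L = "V_fun F ?t / b"
  let ?y = "b\<^sup>2 * real j / real k"
  have "?L < V_fun F ?t" using assms by (simp add: divide_less_eq)
  then have "F ?L < exp (-1 / ?t)" by (rule V_G2)
  then have "F ?L ^ m < exp (-1 / ?t) ^ m" using m1 F_nonneg by (intro power_strict_mono) auto
  moreover have "exp (-1 / ?t) ^ m = exp (- ?y)"
    using assms m1 by (simp add: exp_of_nat_mult[symmetric] field_simps)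
  ultimately have "1 - exp (- ?y) \<le> 1 - F ?L ^ m" by simp
  moreover have "?y / (1 + ?y) \<le> 1 - exp (- ?y)" by (rule one_minus_exp_ge) (use assms in auto)
  moreover have "?y / b \<le> ?y / (1 + ?y)"
  proof (rule divide_left_mono)
    have y0: "0 \<le> ?y" by simp
    show "1 + ?y \<le> b" using assms(4) by simp
    show "0 \<le> ?y" by (rule y0)
    show "0 < b * (1 + ?y)" using assms(1) y0 by (intro mult_pos_pos) linarith+
  qed
  ultimately have "?y / b \<le> 1 - F ?L ^ m" by linarith
  then have "real k * (?y / b) \<le> real k * (1 - F ?L ^ m)" by (rule mult_left_mono) simp
  moreover have "real k * (?y / b) = b * real j" using assms by (simp add: field_simps power2_eq_square)
  ultimately show ?thesis by simp
qed

end

locale bm2 = bm +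
  fixes \<gamma> :: real and \<theta> :: "nat \<Rightarrow> real"
  assumes gpos: "\<gamma> > 0" and A1: "condA1 F \<gamma>"
    and th_pos: "\<And>k. k \<ge> 1 \<Longrightarrow> 0 < \<theta> k \<and> \<theta> k \<le> real k"
    and th_top: "filterlim \<theta> at_top sequentially"
    and th_o: "(\<lambda>k. \<theta> k / real k) \<longlonglongrightarrow> 0"
begin

lemma A1i: "x > 0 \<Longrightarrow> ((\<lambda>t. ln (V_fun F (t * x)) - ln (V_fun F t)) \<longlongrightarrow> \<gamma> * ln x) at_top"
  using A1 unfolding condA1_def by blast

lemma V_pos_ev: "\<exists>t0>0. \<forall>t\<ge>t0. V_fun F t > 0"
proof (rule ccontr)
  assume no: "\<not> ?thesis"
  have nv: "V_fun F t \<le> 0" if "t > 0" for t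
  proof (rule ccontr)
    assume "\<not> V_fun F t \<le> 0"
    then have "\<forall>t'\<ge>t. V_fun F t' > 0" using V_mono[OF that] by (meson less_le_trans not_le)
    then show False using no that by blast
  qed
  have "\<gamma> * ln 2 > 0" using gpos by simp
  have "eventually (\<lambda>t. ln (V_fun F (t * 2)) - ln (V_fun F t) > 0) at_top"
    by (rule order_tendstoD(1)[OF A1i[of 2]]) (use gpos in simp_all)
  then obtain T where T: "\<And>t. t \<ge> T \<Longrightarrow> ln (V_fun F (t * 2)) - ln (V_fun F t) > 0"
    by (auto simp: eventually_at_top_linorder)
  define t where "t = max T 1"
  have t: "t \<ge> T" "t > 0" unfolding t_def by auto
  show False
  proof (cases "V_fun F (t * 2) = 0")
    case True
    have "V_fun F (t * 2 * 2) \<ge> V_fun F (t * 2)" using t by (intro V_mono) auto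
    moreover have "V_fun F (t * 2 * 2) \<le> 0" using nv t by simp
    ultimately have "V_fun F (t * 2 * 2) = 0" using True by simp
    then have "ln (V_fun F (t * 2 * 2)) - ln (V_fun F (t * 2)) = 0" using True by simp
    moreover have "ln (V_fun F (t * 2 * 2)) - ln (V_fun F (t * 2)) > 0" using T[of "t * 2"] t by simp
    ultimately show False by simp
  next
    case False
    then have v2: "V_fun F (t * 2) < 0" using nv t by (meson less_le mult_pos_pos zero_less_numeral)
    have v1: "V_fun F t \<le> V_fun F (t * 2)" using t by (intro V_mono) auto
    have "ln (V_fun F (t * 2)) = ln (- V_fun F (t * 2))" by (simp add: ln_minus)
    also have "\<dots> \<le> ln (- V_fun F t)" using v1 v2 by simp
    also have "\<dots> = ln (V_fun F t)" by (simp add: ln_minus)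
    finally show False using T[of t] t by simp
  qed
qed

end



lemma analytic:
  fixes L1 T1 U1 L2 T2 U2 \<gamma> \<epsilon> :: real
  assumes "0 < L1" "L1 < T1" "T1 \<le> U1" "0 < L2" "L2 < T2" "T2 \<le> U2"
    and "ln U1 - ln L2 < (\<gamma> + \<epsilon>) * ln 2" "(\<gamma> - \<epsilon>) * ln 2 < ln L1 - ln U2"
  shows "\<bar>(ln T1 - ln T2) / ln 2 - \<gamma>\<bar> < \<epsilon>"
proof -
  have "ln T1 \<le> ln U1" "ln L2 < ln T2" "ln L1 < ln T1" "ln T2 \<le> ln U2"
    using assms by auto
  then have "ln T1 - ln T2 < (\<gamma> + \<epsilon>) * ln 2" "(\<gamma> - \<epsilon>) * ln 2 < ln T1 - ln T2"
    using assms by linarith+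
  then have "(ln T1 - ln T2) / ln 2 < \<gamma> + \<epsilon>" "\<gamma> - \<epsilon> < (ln T1 - ln T2) / ln 2"
    by (simp_all add: divide_simps)
  then show ?thesis by linarith
qed

context bm2 begin

definition j1 :: "nat \<Rightarrow> nat" where "j1 k = nat \<lceil>\<theta> k / 4\<rceil>"
definition j2 :: "nat \<Rightarrow> nat" where "j2 k = nat \<lceil>\<theta> k / 2\<rceil>"

lemma j_bounds:
  assumes "k \<ge> 1"
  shows "\<theta> k / 4 \<le> real (j1 k)" "real (j1 k) \<le> \<theta> k / 4 + 1"
    "\<theta> k / 2 \<le> real (j2 k)" "real (j2 k) \<le> \<theta> k / 2 + 1" "j1 k \<ge> 1" "j1 k \<le> j2 k"
    "int (j1 k) = \<lceil>\<theta> k / 4\<rceil>" "int (j2 k) = \<lceil>\<theta> k / 2\<rceil>"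
proof -
  have th: "\<theta> k > 0" using th_pos assms by auto
  have c1: "\<lceil>\<theta> k / 4\<rceil> \<ge> 1" using th by simp
  have c2: "\<lceil>\<theta> k / 2\<rceil> \<ge> 1" using th by simp
  show i1: "int (j1 k) = \<lceil>\<theta> k / 4\<rceil>" unfolding j1_def using c1 by simp
  show i2: "int (j2 k) = \<lceil>\<theta> k / 2\<rceil>" unfolding j2_def using c2 by simp
  have r1: "real (j1 k) = of_int \<lceil>\<theta> k / 4\<rceil>" using i1 by (metis of_int_of_nat_eq)
  have r2: "real (j2 k) = of_int \<lceil>\<theta> k / 2\<rceil>" using i2 by (metis of_int_of_nat_eq)
  show "\<theta> k / 4 \<le> real (j1 k)" using r1 le_of_int_ceiling by simp
  show "real (j1 k) \<le> \<theta> k / 4 + 1" using r1 of_int_ceiling_le_add_one by simp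
  show "\<theta> k / 2 \<le> real (j2 k)" using r2 le_of_int_ceiling by simp
  show "real (j2 k) \<le> \<theta> k / 2 + 1" using r2 of_int_ceiling_le_add_one by simp
  have "int (j1 k) \<ge> 1" using i1 c1 by simp
  then show "j1 k \<ge> 1" by simp
  show "j1 k \<le> j2 k" unfolding j1_def j2_def using th by (intro nat_mono ceiling_mono) simp
qed

lemma bound_k:
  fixes b \<kappa> \<epsilon> :: real and k :: nat
  defines "S \<equiv> real m * real k / real (j2 k)"
  defines "S1 \<equiv> real m * real k / real (j1 k)"
  assumes b1: "b > 1" and lnb: "ln b = \<kappa>" and kap: "(4 * \<gamma> + 2) * \<kappa> \<le> \<epsilon> * ln 2"
    and k1: "k \<ge> 1" and jk: "j2 k < k"
    and rat1: "real (j2 k) \<le> 2 * b * real (j1 k)" and rat2: "2 * real (j1 k) \<le> b * real (j2 k)"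
    and yb: "b\<^sup>2 * real (j2 k) / real k \<le> b - 1"
    and vp1: "V_fun F (S / b\<^sup>2) > 0" and vp2: "V_fun F (b * S * (2 / b ^ 4)) > 0"
    and A: "ln (V_fun F (S / b\<^sup>2 * (2 * b ^ 4))) - ln (V_fun F (S / b\<^sup>2)) < \<gamma> * ln (2 * b ^ 4) + \<kappa>"
    and B: "\<gamma> * ln (2 / b ^ 4) - \<kappa> < ln (V_fun F (b * S * (2 / b ^ 4))) - ln (V_fun F (b * S))"
  shows "prob {\<omega> \<in> space M. \<bar>gamma_hat X m (\<theta> k) k \<omega> - \<gamma>\<bar> > \<epsilon>}
     \<le> 2 * (b / ((b - 1)\<^sup>2 * real (j1 k))) + 2 * (b / ((b - 1)\<^sup>2 * real (j2 k)))"
proof -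
  have jb: "1 \<le> j1 k" "j1 k \<le> j2 k" "int (j1 k) = \<lceil>\<theta> k / 4\<rceil>" "int (j2 k) = \<lceil>\<theta> k / 2\<rceil>"
    using j_bounds[OF k1] by auto
  have j1pos: "j1 k > 0" and j2pos: "j2 k > 0" using jb by auto
  have kpos: "k > 0" using k1 by simp
  have bpos: "b > 0" using b1 by simp
  have mpos: "real m > 0" using m1 by simp
  have Spos: "S > 0" unfolding S_def using j2pos kpos mpos by simp
  have S1pos: "S1 > 0" unfolding S1_def using j1pos kpos mpos by simp
  have SS1: "S \<le> S1" unfolding S_def S1_def using jb j1pos kpos mpos
    by (intro divide_left_mono) auto
  have S1S: "S1 \<le> 2 * b * S"
  proof -
    have "S1 = real m * real k / real (j1 k)" by (simp add: S1_def)
    also have "\<dots> \<le> real m * real k / (real (j2 k) / (2 * b))"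
      using rat1 j1pos j2pos kpos mpos b1
      by (intro divide_left_mono) (auto simp: field_simps)
    also have "\<dots> = 2 * b * S" unfolding S_def using bpos by (simp add: field_simps)
    finally show ?thesis .
  qed
  have SS1': "2 * S / b \<le> S1"
  proof -
    have "2 * S / b = real m * real k / (b * real (j2 k) / 2)"
      unfolding S_def using bpos by (simp add: field_simps)
    also have "\<dots> \<le> real m * real k / real (j1 k)"
      using rat2 j1pos j2pos kpos mpos b1
      by (intro divide_left_mono) (auto simp: field_simps)
    finally show ?thesis unfolding S1_def .
  qed
  have y1: "b\<^sup>2 * real (j1 k) / real k \<le> b - 1"
  proof -
    have "b\<^sup>2 * real (j1 k) / real k \<le> b\<^sup>2 * real (j2 k) / real k"
      using jb by (intro divide_right_mono mult_left_mono) auto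
    then show ?thesis using yb by linarith
  qed
  have vq1: "V_fun F (S1 / b\<^sup>2) > 0"
  proof -
    have "V_fun F (S / b\<^sup>2) \<le> V_fun F (S1 / b\<^sup>2)"
      using Spos SS1 bpos by (intro V_mono divide_right_mono) auto
    then show ?thesis using vp1 by linarith
  qed
  define U1 where "U1 = V_fun F (b * S1)"
  define L1 where "L1 = V_fun F (S1 / b\<^sup>2) / b"
  define U2 where "U2 = V_fun F (b * S)"
  define L2 where "L2 = V_fun F (S / b\<^sup>2) / b"
  have b3: "1 \<le> b * (b * b)" using one_le_power[of b 3] b1 by (simp add: power3_eq_cube mult.assoc)
  have L1pos: "L1 > 0" unfolding L1_def using vq1 bpos by simp
  have L2pos: "L2 > 0" unfolding L2_def using vp1 bpos by simp
  have U1pos: "U1 > 0"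
  proof -
    have "V_fun F (S1 / b\<^sup>2) \<le> V_fun F (b * S1)"
      using S1pos b1 by (intro V_mono) (use b3 in \<open>auto simp: field_simps power2_eq_square\<close>)
    then show ?thesis unfolding U1_def using vq1 by linarith
  qed
  have U2pos: "U2 > 0"
  proof -
    have "V_fun F (S / b\<^sup>2) \<le> V_fun F (b * S)"
      using Spos b1 by (intro V_mono) (use b3 in \<open>auto simp: field_simps power2_eq_square\<close>)
    then show ?thesis unfolding U2_def using vp1 by linarith
  qed
  have ln2b4: "ln (2 * b ^ 4) = ln 2 + 4 * \<kappa>" using bpos lnb by (simp add: ln_mult ln_realpow)
  have ln2b4': "ln (2 / b ^ 4) = ln 2 - 4 * \<kappa>" using bpos lnb by (simp add: ln_div ln_realpow)
  have upper: "ln U1 - ln L2 < (\<gamma> + \<epsilon>) * ln 2"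
  proof -
    have "U1 \<le> V_fun F (S / b\<^sup>2 * (2 * b ^ 4))"
      unfolding U1_def using S1pos bpos S1S
      by (intro V_mono) (auto simp: field_simps power2_eq_square power4_eq_xxxx)
    then have "ln U1 \<le> ln (V_fun F (S / b\<^sup>2 * (2 * b ^ 4)))" using U1pos by simp
    moreover have "ln L2 = ln (V_fun F (S / b\<^sup>2)) - \<kappa>"
      unfolding L2_def using vp1 bpos lnb by (simp add: ln_div)
    ultimately have "ln U1 - ln L2 < \<gamma> * ln (2 * b ^ 4) + 2 * \<kappa>" using A by linarith
    also have "\<dots> = \<gamma> * ln 2 + (4 * \<gamma> + 2) * \<kappa>" unfolding ln2b4 by (simp add: algebra_simps)
    also have "\<dots> \<le> (\<gamma> + \<epsilon>) * ln 2" using kap by (simp add: algebra_simps)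
    finally show ?thesis .
  qed
  have lower: "(\<gamma> - \<epsilon>) * ln 2 < ln L1 - ln U2"
  proof -
    have "V_fun F (b * S * (2 / b ^ 4)) \<le> V_fun F (S1 / b\<^sup>2)"
    proof (rule V_mono)
      show "0 < b * S * (2 / b ^ 4)" using bpos Spos by simp
      have "b * S * (2 / b ^ 4) = (2 * S / b) / b\<^sup>2" using bpos by (simp add: field_simps power2_eq_square power4_eq_xxxx)
      also have "\<dots> \<le> S1 / b\<^sup>2" using SS1' bpos by (intro divide_right_mono) auto
      finally show "b * S * (2 / b ^ 4) \<le> S1 / b\<^sup>2" .
    qed
    then have "ln (V_fun F (b * S * (2 / b ^ 4))) \<le> ln (V_fun F (S1 / b\<^sup>2))" using vp2 by simp
    moreover have "ln L1 = ln (V_fun F (S1 / b\<^sup>2)) - \<kappa>"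
      unfolding L1_def using vq1 bpos lnb by (simp add: ln_div)
    ultimately have "\<gamma> * ln (2 / b ^ 4) - 2 * \<kappa> < ln L1 - ln U2" using B unfolding U2_def by linarith
    moreover have "\<gamma> * ln (2 / b ^ 4) - 2 * \<kappa> = \<gamma> * ln 2 - (4 * \<gamma> + 2) * \<kappa>"
      unfolding ln2b4' by (simp add: algebra_simps)
    moreover have "(\<gamma> - \<epsilon>) * ln 2 \<le> \<gamma> * ln 2 - (4 * \<gamma> + 2) * \<kappa>" using kap by (simp add: algebra_simps)
    ultimately show ?thesis by linarith
  qed
  define r1 where "r1 = nat (int k - \<lceil>\<theta> k / 4\<rceil>)"
  define r2 where "r2 = nat (int k - \<lceil>\<theta> k / 2\<rceil>)"
  have r1e: "r1 = k - j1 k" unfolding r1_def using jb jk by linarith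
  have r2e: "r2 = k - j2 k" unfolding r2_def using jb jk by linarith
  have r1b: "1 \<le> r1" "r1 \<le> k" "real r1 = real k - real (j1 k)" using r1e jb jk by auto
  have r2b: "1 \<le> r2" "r2 \<le> k" "real r2 = real k - real (j2 k)" using r2e jb jk by auto
  define A1 where "A1 = {\<omega> \<in> space M. Z k U1 \<omega> < real k - real (j1 k)}"
  define A2 where "A2 = {\<omega> \<in> space M. Z k L1 \<omega> \<ge> real k - real (j1 k)}"
  define A3 where "A3 = {\<omega> \<in> space M. Z k U2 \<omega> < real k - real (j2 k)}"
  define A4 where "A4 = {\<omega> \<in> space M. Z k L2 \<omega> \<ge> real k - real (j2 k)}"
  have ev: "A1 \<in> events" "A2 \<in> events" "A3 \<in> events" "A4 \<in> events"
    unfolding A1_def A2_def A3_def A4_def using Z_meas by measurable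
  have pA1: "prob A1 \<le> b / ((b - 1)\<^sup>2 * real (j1 k))"
    unfolding A1_def U1_def S1_def
    by (rule bound_U[OF j1pos b1 thr_U[OF bpos j1pos kpos]])
  have pA3: "prob A3 \<le> b / ((b - 1)\<^sup>2 * real (j2 k))"
    unfolding A3_def U2_def S_def
    by (rule bound_U[OF j2pos b1 thr_U[OF bpos j2pos kpos]])
  have pA2: "prob A2 \<le> b / ((b - 1)\<^sup>2 * real (j1 k))"
    unfolding A2_def L1_def
    by (rule bound_L[OF j1pos b1 thr_L[OF b1 j1pos kpos y1 vq1[unfolded S1_def]], folded S1_def])
  have pA4: "prob A4 \<le> b / ((b - 1)\<^sup>2 * real (j2 k))"
    unfolding A4_def L2_def
    by (rule bound_L[OF j2pos b1 thr_L[OF b1 j2pos kpos yb vp1[unfolded S_def]], folded S_def])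
  let ?bad = "{\<omega> \<in> space M. \<bar>gamma_hat X m (\<theta> k) k \<omega> - \<gamma>\<bar> > \<epsilon>}"
  have sub: "?bad \<subseteq> A1 \<union> A2 \<union> A3 \<union> A4"
  proof
    fix \<omega> assume w: "\<omega> \<in> ?bad"
    then have om: "\<omega> \<in> space M" by simp
    show "\<omega> \<in> A1 \<union> A2 \<union> A3 \<union> A4"
    proof (rule ccontr)
      assume "\<omega> \<notin> A1 \<union> A2 \<union> A3 \<union> A4"
      then have z: "\<not> Z k U1 \<omega> < real k - real (j1 k)" "\<not> Z k L1 \<omega> \<ge> real k - real (j1 k)"
        "\<not> Z k U2 \<omega> < real k - real (j2 k)" "\<not> Z k L2 \<omega> \<ge> real k - real (j2 k)"
        unfolding A1_def A2_def A3_def A4_def using om by auto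
      let ?T1 = "block_ord_stat X m k r1 \<omega>"
      let ?T2 = "block_ord_stat X m k r2 \<omega>"
      have t1u: "?T1 \<le> U1" using T_le_iff[OF om r1b(1,2)] z(1) r1b(3) by simp
      have t1l: "\<not> ?T1 \<le> L1" using T_le_iff[OF om r1b(1,2)] z(2) r1b(3) by simp
      have t2u: "?T2 \<le> U2" using T_le_iff[OF om r2b(1,2)] z(3) r2b(3) by simp
      have t2l: "\<not> ?T2 \<le> L2" using T_le_iff[OF om r2b(1,2)] z(4) r2b(3) by simp
      have "\<bar>(ln ?T1 - ln ?T2) / ln 2 - \<gamma>\<bar> < \<epsilon>"
        by (rule analytic[OF L1pos _ t1u L2pos _ t2u upper lower]) (use t1l t2l in auto)
      moreover have "gamma_hat X m (\<theta> k) k \<omega> = (ln ?T1 - ln ?T2) / ln 2"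
        unfolding gamma_hat_def r1_def r2_def ..
      ultimately show False using w by simp
    qed
  qed
  have "prob ?bad \<le> prob (A1 \<union> A2 \<union> A3 \<union> A4)"
  proof (cases "?bad \<in> events")
    case True then show ?thesis using sub ev by (intro finite_measure_mono) auto
  next
    case False then have "prob ?bad = 0" by (simp add: measure_notin_sets)
    then show ?thesis by simp
  qed
  also have "\<dots> \<le> prob (A1 \<union> A2 \<union> A3) + prob A4" using ev by (intro measure_Un_le) auto
  also have "prob (A1 \<union> A2 \<union> A3) \<le> prob (A1 \<union> A2) + prob A3" using ev by (intro measure_Un_le) auto
  also have "prob (A1 \<union> A2) \<le> prob A1 + prob A2" using ev by (intro measure_Un_le) auto
  finally show ?thesis using pA1 pA2 pA3 pA4 by linarith
qed

end



context bm2 begin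

lemma th_ev: "eventually (\<lambda>k. c \<le> \<theta> k) sequentially"
  using th_top unfolding filterlim_at_top by auto

lemma k_ev: "eventually (\<lambda>k. c \<le> real k) sequentially"
  using filterlim_real_sequentially unfolding filterlim_at_top by auto

lemma j1_top: "filterlim (\<lambda>k. real (j1 k)) at_top sequentially"
  unfolding filterlim_at_top
proof
  fix Z :: real
  show "eventually (\<lambda>k. Z \<le> real (j1 k)) sequentially"
    using th_ev[of "4 * Z"] eventually_ge_at_top[of 1]
  proof eventually_elim
    case (elim k)
    then show ?case using j_bounds(1)[of k] by linarith
  qed
qed

lemma j2_top: "filterlim (\<lambda>k. real (j2 k)) at_top sequentially"
  unfolding filterlim_at_top
proof
  fix Z :: real
  show "eventually (\<lambda>k. Z \<le> real (j2 k)) sequentially"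
    using th_ev[of "2 * Z"] eventually_ge_at_top[of 1]
  proof eventually_elim
    case (elim k)
    then show ?case using j_bounds(3)[of k] by linarith
  qed
qed

lemma s_top: "filterlim (\<lambda>k. real m * real k / real (j2 k)) at_top sequentially"
  unfolding filterlim_at_top
proof
  fix Z :: real
  define Z' where "Z' = max Z 1"
  have Z'1: "Z' \<ge> 1" unfolding Z'_def by simp
  have "eventually (\<lambda>k. \<theta> k / real k < 1 / (4 * Z')) sequentially"
    by (rule order_tendstoD(2)[OF th_o]) (use Z'1 in simp)
  then show "eventually (\<lambda>k. Z \<le> real m * real k / real (j2 k)) sequentially"
    using eventually_ge_at_top[of 1] k_ev[of "2 * Z'"]
  proof eventually_elim
    case (elim k)
    have kpos: "real k > 0" using elim by simp
    have th: "\<theta> k < real k / (4 * Z')" using elim(1) kpos Z'1 by (simp add: field_simps)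
    have jb: "real (j2 k) \<le> \<theta> k / 2 + 1" "1 \<le> j2 k" using j_bounds[OF elim(2)] by auto
    have "Z' * real (j2 k) \<le> Z' * (\<theta> k / 2 + 1)" using jb Z'1 by (intro mult_left_mono) auto
    also have "\<dots> = Z' * \<theta> k / 2 + Z'" by (simp add: algebra_simps)
    also have "Z' * \<theta> k \<le> real k / 4"
    proof -
      have "Z' * \<theta> k \<le> Z' * (real k / (4 * Z'))" using th Z'1 by (intro mult_left_mono) auto
      also have "\<dots> = real k / 4" using Z'1 by (simp add: field_simps)
      finally show ?thesis .
    qed
    then have "Z' * \<theta> k / 2 + Z' \<le> real k / 8 + Z'" by simp
    also have "\<dots> \<le> real k" using elim(3) by simp
    also have "real k \<le> real m * real k"
      using mult_right_mono[of 1 "real m" "real k"] m1 by simp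
    finally have "Z' * real (j2 k) \<le> real m * real k" by simp
    then have "Z' \<le> real m * real k / real (j2 k)" using jb by (simp add: field_simps)
    then show ?case unfolding Z'_def by simp
  qed
qed

lemma top_scale: "filterlim f at_top sequentially \<Longrightarrow> c > 0 \<Longrightarrow> filterlim (\<lambda>k. c * f k :: real) at_top sequentially"
  by (rule filterlim_tendsto_pos_mult_at_top[OF tendsto_const]) auto

theorem main:
  assumes eps: "\<epsilon> > 0"
  shows "(\<lambda>k. prob {\<omega> \<in> space M. \<bar>gamma_hat X m (\<theta> k) k \<omega> - \<gamma>\<bar> > \<epsilon>}) \<longlonglongrightarrow> 0"
proof -
  define \<kappa> where "\<kappa> = \<epsilon> * ln 2 / (2 * (4 * \<gamma> + 1))"
  have kpos: "\<kappa> > 0" using eps gpos unfolding \<kappa>_def by (intro divide_pos_pos mult_pos_pos) auto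
  define b where "b = exp \<kappa>"
  have b1: "b > 1" unfolding b_def using kpos by simp
  have bpos: "b > 0" using b1 by simp
  have lnb: "ln b = \<kappa>" unfolding b_def by simp
  have kap: "(4 * \<gamma> + 2) * \<kappa> \<le> \<epsilon> * ln 2"
  proof -
    have "(4 * \<gamma> + 2) * \<kappa> = (\<epsilon> * ln 2) * ((4 * \<gamma> + 2) / (2 * (4 * \<gamma> + 1)))"
      unfolding \<kappa>_def by (simp add: field_simps)
    also have "\<dots> \<le> (\<epsilon> * ln 2) * 1"
      using eps gpos by (intro mult_left_mono) (auto simp: field_simps)
    finally show ?thesis by simp
  qed
  obtain t0 where t0: "t0 > 0" "\<And>t. t \<ge> t0 \<Longrightarrow> V_fun F t > 0" using V_pos_ev by auto
  define S where "S k = real m * real k / real (j2 k)" for k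
  have S_top: "filterlim S at_top sequentially" unfolding S_def by (rule s_top)
  have tA_top: "filterlim (\<lambda>k. S k / b\<^sup>2) at_top sequentially"
    using top_scale[OF S_top, of "1 / b\<^sup>2"] bpos by simp
  have tB_top: "filterlim (\<lambda>k. b * S k) at_top sequentially"
    using top_scale[OF S_top, of b] bpos by simp
  have xA: "2 * b ^ 4 > 0" using bpos by simp
  have xB: "2 / b ^ 4 > 0" using bpos by simp
  have limA: "((\<lambda>k. ln (V_fun F (S k / b\<^sup>2 * (2 * b ^ 4))) - ln (V_fun F (S k / b\<^sup>2))) \<longlongrightarrow> \<gamma> * ln (2 * b ^ 4)) sequentially"
    by (rule filterlim_compose[OF A1i[OF xA] tA_top])
  have limB: "((\<lambda>k. ln (V_fun F (b * S k * (2 / b ^ 4))) - ln (V_fun F (b * S k))) \<longlongrightarrow> \<gamma> * ln (2 / b ^ 4)) sequentially"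
    by (rule filterlim_compose[OF A1i[OF xB] tB_top])
  have evA: "eventually (\<lambda>k. ln (V_fun F (S k / b\<^sup>2 * (2 * b ^ 4))) - ln (V_fun F (S k / b\<^sup>2)) < \<gamma> * ln (2 * b ^ 4) + \<kappa>) sequentially"
    by (rule order_tendstoD(2)[OF limA]) (use kpos in simp)
  have evB: "eventually (\<lambda>k. \<gamma> * ln (2 / b ^ 4) - \<kappa> < ln (V_fun F (b * S k * (2 / b ^ 4))) - ln (V_fun F (b * S k))) sequentially"
    by (rule order_tendstoD(1)[OF limB]) (use kpos in simp)
  have evS: "eventually (\<lambda>k. t0 * b ^ 3 \<le> S k) sequentially"
    using S_top unfolding filterlim_at_top by auto
  define \<eta> where "\<eta> = min (1/2) ((b - 1) / (2 * b\<^sup>2))"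
  have etapos: "\<eta> > 0" unfolding \<eta>_def using b1 by simp
  have evsmall: "eventually (\<lambda>k. \<theta> k / real k < \<eta>) sequentially"
    by (rule order_tendstoD(2)[OF th_o etapos])
  define R where "R k = 2 * (b / ((b - 1)\<^sup>2 * real (j1 k))) + 2 * (b / ((b - 1)\<^sup>2 * real (j2 k)))" for k
  have ev_bound: "eventually (\<lambda>k. prob {\<omega> \<in> space M. \<bar>gamma_hat X m (\<theta> k) k \<omega> - \<gamma>\<bar> > \<epsilon>} \<le> R k) sequentially"
    using evA evB evS evsmall eventually_ge_at_top[of 1] th_ev[of "4 / (b - 1)"] k_ev[of "max 2 (2 * b\<^sup>2 / (b - 1))"]
  proof eventually_elim
    case (elim k)
    have k1: "k \<ge> 1" using elim by simp
    have kpos: "real k > 0" using k1 by simp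
    note jb = j_bounds[OF k1]
    have thpos: "\<theta> k > 0" using th_pos k1 by auto
    have th_eta: "\<theta> k < \<eta> * real k" using elim(4) kpos by (simp add: field_simps)
    have bth: "(b - 1) * \<theta> k \<ge> 4" using elim(6) b1 by (simp add: field_simps)
    have bth': "b * \<theta> k \<ge> \<theta> k + 4" using bth by (simp add: algebra_simps)
    have k2: "real k \<ge> 2" "real k \<ge> 2 * b\<^sup>2 / (b - 1)" using elim(7) by auto
    have jk: "j2 k < k"
    proof -
      have "\<eta> \<le> 1 / 2" unfolding \<eta>_def by simp
      then have "\<eta> * real k \<le> 1 / 2 * real k" using kpos by (intro mult_right_mono) auto
      then have "\<theta> k < real k / 2" using th_eta by simp
      then have "real (j2 k) < real k" using jb(4) k2(1) by linarith
      then show ?thesis by simp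
    qed
    have rat1: "real (j2 k) \<le> 2 * b * real (j1 k)"
    proof -
      have "2 * b * (\<theta> k / 4) \<le> 2 * b * real (j1 k)" using jb(1) bpos by (intro mult_left_mono) auto
      then show ?thesis using jb(4) bth' by (simp add: algebra_simps)
    qed
    have rat2: "2 * real (j1 k) \<le> b * real (j2 k)"
    proof -
      have "b * (\<theta> k / 2) \<le> b * real (j2 k)" using jb(3) bpos by (intro mult_left_mono) auto
      then show ?thesis using jb(2) bth' by (simp add: algebra_simps)
    qed
    have yb: "b\<^sup>2 * real (j2 k) / real k \<le> b - 1"
    proof -
      have e1: "b\<^sup>2 * \<theta> k \<le> (b - 1) * real k / 2"
      proof -
        have "\<eta> \<le> (b - 1) / (2 * b\<^sup>2)" unfolding \<eta>_def by simp
        then have "\<eta> * real k \<le> (b - 1) / (2 * b\<^sup>2) * real k" using kpos by (intro mult_right_mono) auto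
        then have "\<theta> k \<le> (b - 1) / (2 * b\<^sup>2) * real k" using th_eta by simp
        then have "b\<^sup>2 * \<theta> k \<le> b\<^sup>2 * ((b - 1) / (2 * b\<^sup>2) * real k)" by (intro mult_left_mono) auto
        also have "\<dots> = (b - 1) * real k / 2" using bpos by (simp add: field_simps)
        finally show ?thesis .
      qed
      have e2: "b\<^sup>2 \<le> (b - 1) * real k / 2"
        using k2(2) b1 by (simp add: field_simps)
      have "b\<^sup>2 * real (j2 k) \<le> b\<^sup>2 * (\<theta> k / 2 + 1)" using jb(4) by (intro mult_left_mono) auto
      also have "\<dots> = b\<^sup>2 * \<theta> k / 2 + b\<^sup>2" by (simp add: algebra_simps)
      also have "\<dots> \<le> (b - 1) * real k" using e1 e2 mult_nonneg_nonneg[of "b - 1" "real k"] b1 kpos by linarith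
      finally show ?thesis using kpos by (simp add: field_simps)
    qed
    have Sk: "S k \<ge> t0 * b ^ 3" using elim(3) by simp
    have b3: "b ^ 3 \<ge> 1" using b1 by simp
    have vp1: "V_fun F (S k / b\<^sup>2) > 0"
    proof (rule t0(2))
      have "t0 * b ^ 3 / b\<^sup>2 = t0 * b" using bpos by (simp add: field_simps power2_eq_square power3_eq_cube)
      moreover have "t0 * b ^ 3 / b\<^sup>2 \<le> S k / b\<^sup>2" using Sk by (intro divide_right_mono) auto
      moreover have "t0 \<le> t0 * b" using t0(1) b1 by simp
      ultimately show "t0 \<le> S k / b\<^sup>2" by linarith
    qed
    have vp2: "V_fun F (b * S k * (2 / b ^ 4)) > 0"
    proof (rule t0(2))
      have "b * S k * (2 / b ^ 4) = 2 * (S k / b ^ 3)" using bpos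
        by (simp add: field_simps power3_eq_cube power4_eq_xxxx)
      moreover have "t0 \<le> S k / b ^ 3" using Sk bpos by (simp add: field_simps)
      ultimately show "t0 \<le> b * S k * (2 / b ^ 4)" using t0(1) by linarith
    qed
    show ?case unfolding R_def
      by (rule bound_k[OF b1 lnb kap k1 jk rat1 rat2 yb vp1[unfolded S_def] vp2[unfolded S_def]
            elim(1)[unfolded S_def] elim(2)[unfolded S_def]])
  qed
  have R0: "R \<longlonglongrightarrow> 0"
  proof -
    have i1: "(\<lambda>k. inverse (real (j1 k))) \<longlonglongrightarrow> 0" by (rule tendsto_inverse_0_at_top[OF j1_top])
    have i2: "(\<lambda>k. inverse (real (j2 k))) \<longlonglongrightarrow> 0" by (rule tendsto_inverse_0_at_top[OF j2_top])
    define c where "c = 2 * (b / (b - 1)\<^sup>2)"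
    have l: "(\<lambda>k. c * inverse (real (j1 k)) + c * inverse (real (j2 k))) \<longlonglongrightarrow> 0 + 0"
      by (rule tendsto_add[OF tendsto_mult_right_zero[OF i1] tendsto_mult_right_zero[OF i2]])
    have eqR: "R = (\<lambda>k. c * inverse (real (j1 k)) + c * inverse (real (j2 k)))"
      unfolding R_def c_def by (rule ext) (simp add: divide_inverse inverse_mult_distrib mult.assoc mult.left_commute)
    show ?thesis unfolding eqR using l by (simp only: add_0_left)
  qed
  show ?thesis
  proof (rule tendsto_sandwich[OF _ ev_bound tendsto_const R0])
    show "eventually (\<lambda>k. 0 \<le> prob {\<omega> \<in> space M. \<bar>gamma_hat X m (\<theta> k) k \<omega> - \<gamma>\<bar> > \<epsilon>}) sequentially"
      by simp
  qed
qed

end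

theorem theorem2p1:
  fixes M :: "'a measure" and X :: "nat \<Rightarrow> 'a \<Rightarrow> real" and F :: "real \<Rightarrow> real"
    and \<gamma> :: real and m :: nat and \<theta> :: "nat \<Rightarrow> real"
  assumes "prob_space M"
    and "\<And>j. j \<ge> 1 \<Longrightarrow> X j \<in> borel_measurable M"
    and "prob_space.indep_vars M (\<lambda>_. borel) X {1..}"
    and "\<And>j x. j \<ge> 1 \<Longrightarrow> measure M {\<omega> \<in> space M. X j \<omega> \<le> x} = F x"
    and "\<gamma> > 0" and "condA1 F \<gamma>"
    and "m \<ge> 2"
    and "\<And>k. k \<ge> 1 \<Longrightarrow> 0 < \<theta> k \<and> \<theta> k \<le> real k"
    and "filterlim \<theta> at_top sequentially"
    and "(\<lambda>k. \<theta> k / real k) \<longlonglongrightarrow> 0"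
  shows "\<forall>\<epsilon>>0. (\<lambda>k. measure M {\<omega> \<in> space M. \<bar>gamma_hat X m (\<theta> k) k \<omega> - \<gamma>\<bar> > \<epsilon>})
            \<longlonglongrightarrow> 0"
proof -
  have "bm2 M X F m \<gamma> \<theta>"
    unfolding bm2_def bm_def bm2_axioms_def bm_axioms_def using assms by auto
  then interpret bm2 M X F m \<gamma> \<theta> .
  show ?thesis using main by blast
qed

end
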